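(* Let $U\subset\mathbb{C}$ be open. Let $\{F_t\}_{t\ge0}$ and $\{H_t\}_{t\ge0}$ be families of analytic maps $F_t:U\to U$, $H_t:U\to U$ such that: - $F_0(z)=z$ and $H_0(z)=z$; - $F_{t+s}(z)=F_t(F_s(z))$ and $H_{t+s}(z)=H_t(F_s(z))-F_s(z)+H_s(z)$ for all $s,t\ge0$, $z\in U$; - $(t,z)\mapsto F_t(z)$ and $(t,z)\mapsto H_t(z)$ are continuous on $[0,\infty)\times U$. Then there exist analytic functions $A_1,A_2$ on $U$ such that $$\frac{d}{dt}H_t(z)=A_1(F_t(z)),\qquad \frac{d}{dt}F_t(z)=A_2(F_t(z))$$ for all $z\in U$ and $t\in[0,\infty)$. *)

theory Defs
  imports "HOL-Analysis.Analysis"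
begin

end

theory Submission
  imports Defs "HOL-Complex_Analysis.Complex_Analysis"
begin

lemma vd_quot_iff:
  fixes f :: "real \<Rightarrow> complex"
  shows "(f has_vector_derivative D) (at x within S) \<longleftrightarrow>
         ((\<lambda>y. (f y - f x) / of_real (y - x)) \<longlongrightarrow> D) (at x within S)"
  by (simp add: has_vector_derivative_complex_iff has_field_derivative_iff tendsto_complex_iff
      Re_divide_of_real Im_divide_of_real)

lemma lemmaC:
  fixes u V :: "real \<Rightarrow> complex"
  assumes g: "(g has_field_derivative d) (at (u x))" and d: "d \<noteq> 0"
    and u: "continuous (at x within S) u"
    and gV: "\<And>y. y \<in> S \<Longrightarrow> g (u y) = V y" and x: "x \<in> S"
    and V: "(V has_vector_derivative V') (at x within S)"
  shows "(u has_vector_derivative V' / d) (at x within S)"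
proof -
  obtain q where q: "\<And>z. g z - g (u x) = q z * (z - u x)" and qc: "isCont q (u x)" and qd: "q (u x) = d"
    using g unfolding CARAT_DERIV by blast
  have qu: "((\<lambda>y. q (u y)) \<longlongrightarrow> d) (at x within S)"
    using continuous_within_compose3[OF qc u] qd unfolding continuous_within o_def by simp
  then have ev: "eventually (\<lambda>y. q (u y) \<noteq> 0) (at x within S)"
    using d tendsto_imp_eventually_ne by blast
  have lim: "((\<lambda>y. ((V y - V x) / of_real (y - x)) / q (u y)) \<longlongrightarrow> V' / d) (at x within S)"
    using V unfolding vd_quot_iff by (intro tendsto_divide qu d)
  show ?thesis unfolding vd_quot_iff
  proof (rule Lim_transform_eventually[OF lim])
    have "eventually (\<lambda>y. y \<in> S \<and> y \<noteq> x) (at x within S)" by (simp add: eventually_at_filter)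
    with ev show "eventually (\<lambda>y. ((V y - V x) / of_real (y - x)) / q (u y) = (u y - u x) / of_real (y - x)) (at x within S)"
    proof eventually_elim
      case (elim y)
      have "V y - V x = q (u y) * (u y - u x)" using q[of "u y"] gV[OF conjunct1[OF elim(2)]] gV[OF x] by simp
      have "y - x \<noteq> 0" using elim(2) by simp
      then have "of_real (y - x) \<noteq> (0::complex)" by simp
      then show ?case unfolding \<open>V y - V x = _\<close> using elim(1) by simp
    qed
  qed
qed

lemma int_deriv0:
  fixes f :: "real \<Rightarrow> 'a::banach"
  assumes f: "continuous_on {0..} f" and t: "t \<ge> 0"
  shows "((\<lambda>u. integral {0..u} f) has_vector_derivative f t) (at t within {0..})"
proof -
  have "((\<lambda>u. integral {0..u} f) has_vector_derivative f t) (at t within {0..t+1})"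
    by (rule integral_has_vector_derivative) (use t in \<open>auto intro: continuous_on_subset[OF f]\<close>)
  moreover have "at t within {0..t+1} = at t within {0..}"
    by (rule at_within_nhd[of _ "{..<t+1}"]) auto
  ultimately show ?thesis by simp
qed

lemma int_shift_deriv:
  fixes f :: "real \<Rightarrow> 'a::banach"
  assumes f: "continuous_on {0..} f" and t: "t \<ge> 0" and tau: "\<tau> \<ge> 0"
  shows "((\<lambda>u. integral {0..u+\<tau>} f - integral {0..u} f) has_vector_derivative f (t+\<tau>) - f t) (at t within {0..})"
proof -
  have d1: "((\<lambda>u. u + \<tau>) has_vector_derivative 1) (at t within {0..})"
    by (auto intro!: derivative_eq_intros)
  have "((\<lambda>u. integral {0..u} f) has_vector_derivative f (t+\<tau>)) (at (t+\<tau>) within {0..})"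
    using int_deriv0[OF f] t tau by simp
  then have "((\<lambda>u. integral {0..u} f) has_vector_derivative f (t+\<tau>)) (at (t+\<tau>) within (\<lambda>u. u + \<tau>) ` {0..})"
    by (rule has_vector_derivative_within_subset) (use tau in auto)
  from vector_diff_chain_within[OF d1 this]
  have "((\<lambda>u. integral {0..u+\<tau>} f) has_vector_derivative f (t+\<tau>)) (at t within {0..})"
    by (simp add: o_def)
  then show ?thesis
    by (intro has_vector_derivative_diff int_deriv0 f t)
qed

lemma int_shift_eq:
  fixes f :: "real \<Rightarrow> complex"
  assumes f: "continuous_on {0..} f" and t: "t \<ge> 0" and tau: "\<tau> \<ge> 0"
  shows "integral {0..\<tau>} (\<lambda>s. f (s + t)) = integral {0..t+\<tau>} f - integral {0..t} f"
proof -
  have "integral {0..\<tau>} (\<lambda>s. f (s + t)) = integral {0..\<tau>} (f \<circ> (+) t)"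
    by (simp add: o_def add.commute)
  also have "\<dots> = integral {t..t+\<tau>} f" by (simp add: integral_shift_Icc_real add.commute)
  also have "\<dots> = integral {0..t+\<tau>} f - integral {0..t} f"
    using Henstock_Kurzweil_Integration.integral_combine[where a=0 and c=t and b="t+\<tau>" and f=f] t tau
      integrable_continuous_real[OF continuous_on_subset[OF f, of "{0..t+\<tau>}"]]
    by (auto simp: algebra_simps)
  finally show ?thesis .
qed

lemma deriv_joint_cont:
  fixes G :: "real \<Rightarrow> complex \<Rightarrow> complex"
  assumes U: "open U" and S: "closed S" and hol: "\<And>s. s \<in> S \<Longrightarrow> G s holomorphic_on U"
    and cont: "continuous_on (S \<times> U) (\<lambda>(s,w). G s w)"
  shows "continuous_on (S \<times> U) (\<lambda>(s,w). deriv (G s) w)"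
  unfolding continuous_on_iff
proof (intro ballI allI impI)
  fix p and e :: real assume p: "p \<in> S \<times> U" and e: "0 < e"
  obtain s w where pe: "p = (s,w)" and s: "s \<in> S" and w: "w \<in> U" using p by auto
  obtain r0 where r0: "r0 > 0" "cball w r0 \<subseteq> U" using U w open_contains_cball by blast
  define r where "r = r0 / 2"
  have r: "r > 0" "cball w (2*r) \<subseteq> U" using r0 by (auto simp: r_def)
  define K where "K = (S \<inter> cball s 1) \<times> cball w (2*r)"
  have "compact K" unfolding K_def using S by (intro compact_Times) (auto intro: closed_Int_compact)
  moreover have "K \<subseteq> S \<times> U" using r K_def by auto
  ultimately have "uniformly_continuous_on K (\<lambda>(s,w). G s w)"
    by (intro compact_uniformly_continuous continuous_on_subset[OF cont])
  then obtain d1 where d1: "d1 > 0" "\<And>x x'. x \<in> K \<Longrightarrow> x' \<in> K \<Longrightarrow> dist x' x < d1 \<Longrightarrow>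
      dist ((\<lambda>(s,w). G s w) x') ((\<lambda>(s,w). G s w) x) < e*r/4"
    by (rule uniformly_continuous_onE[where \<epsilon>="e*r/4"]) (use e r in auto)
  have "continuous_on U (deriv (G s))" using hol[OF s] U
    by (intro holomorphic_on_imp_continuous_on holomorphic_deriv)
  then obtain d2 where d2: "d2>0" "\<And>w'. w' \<in> U \<Longrightarrow> dist w' w < d2 \<Longrightarrow> dist (deriv (G s) w') (deriv (G s) w) < e/2"
    using w e unfolding continuous_on_iff by (meson half_gt_zero)
  show "\<exists>d>0. \<forall>p'\<in>S \<times> U. dist p' p < d \<longrightarrow>
      dist ((\<lambda>(s,w). deriv (G s) w) p') ((\<lambda>(s,w). deriv (G s) w) p) < e"
  proof (intro exI[of _ "min (min d1 d2) (min r 1)"] conjI ballI impI)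
    show "0 < min (min d1 d2) (min r 1)" using d1 d2 r by auto
    fix p' assume p': "p' \<in> S \<times> U" "dist p' p < min (min d1 d2) (min r 1)"
    obtain s' w' where pe': "p' = (s',w')" and s': "s' \<in> S" and w': "w' \<in> U" using p' by auto
    have ds: "dist s' s < min (min d1 d2) (min r 1)"
      using dist_fst_le[of p' p] p'(2) pe pe' by simp
    have dw: "dist w' w < min (min d1 d2) (min r 1)"
      using dist_snd_le[of p' p] p'(2) pe pe' by simp
    have sub: "cball w' r \<subseteq> cball w (2*r)"
    proof
      fix x assume "x \<in> cball w' r"
      then have "dist w' x \<le> r" by simp
      moreover have "dist w w' < r" using dw by (simp add: dist_commute)
      ultimately show "x \<in> cball w (2*r)" using dist_triangle[of w x w'] by simp
    qed
    have bU: "ball w' r \<subseteq> U" "cball w' r \<subseteq> U" using sub r ball_subset_cball by blast+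
    define f where "f = (\<lambda>z. G s' z - G s z)"
    have fh: "f holomorphic_on ball w' r" unfolding f_def
      by (intro holomorphic_on_diff holomorphic_on_subset[OF hol[OF s']] holomorphic_on_subset[OF hol[OF s]] bU)
    have fc: "continuous_on (cball w' r) f" unfolding f_def
      by (intro continuous_on_diff holomorphic_on_imp_continuous_on holomorphic_on_subset[OF hol[OF s']]
           holomorphic_on_subset[OF hol[OF s]] bU)
    have bound: "norm (f x) \<le> e*r/4" if "norm (w' - x) = r" for x
    proof -
      have x: "x \<in> cball w (2*r)" using sub that by (auto simp: dist_norm)
      have "(s, x) \<in> K" "(s', x) \<in> K" using x s s' ds by (auto simp: K_def dist_commute)
      moreover have "dist (s', x) (s, x) < d1" using ds by (simp add: dist_Pair_Pair)
      ultimately have "dist (G s' x) (G s x) < e*r/4" using d1(2) by fastforce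
      then show ?thesis by (simp add: f_def dist_norm)
    qed
    have "norm ((deriv ^^ 1) f w') \<le> fact 1 * (e*r/4) / r^1"
      by (rule Cauchy_inequality[OF fh fc r(1) bound])
    then have n1: "norm (deriv f w') \<le> e/4" using r by simp
    have "deriv f w' = deriv (G s') w' - deriv (G s) w'" unfolding f_def
      by (intro deriv_diff holomorphic_on_imp_differentiable_at[OF hol[OF s'] U w']
          holomorphic_on_imp_differentiable_at[OF hol[OF s] U w'])
    with n1 have n1': "dist (deriv (G s') w') (deriv (G s) w') \<le> e/4" by (simp add: dist_norm)
    have n2: "dist (deriv (G s) w') (deriv (G s) w) < e/2" using d2(2)[OF w'] dw by simp
    have "dist (deriv (G s') w') (deriv (G s) w) < e"
      using dist_triangle[of "deriv (G s') w'" "deriv (G s) w" "deriv (G s) w'"] n1' n2 e by simp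
    then show "dist ((\<lambda>(s,w). deriv (G s) w) p') ((\<lambda>(s,w). deriv (G s) w) p) < e"
      by (simp add: pe pe')
  qed
qed

lemma param_int_deriv:
  fixes G :: "real \<Rightarrow> complex \<Rightarrow> complex"
  assumes U: "open U" and hol: "\<And>s. s \<in> {a..b} \<Longrightarrow> G s holomorphic_on U"
    and cont: "continuous_on ({a..b} \<times> U) (\<lambda>(s,w). G s w)" and w: "w \<in> U"
  shows "((\<lambda>w. integral {a..b} (\<lambda>s. G s w)) has_field_derivative integral {a..b} (\<lambda>s. deriv (G s) w)) (at w)"
proof -
  obtain r where r: "r > 0" "ball w r \<subseteq> U" using U w open_contains_ball by blast
  have dc: "continuous_on ({a..b} \<times> U) (\<lambda>(s,w). deriv (G s) w)"
    by (rule deriv_joint_cont[OF U _ hol cont]) auto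
  have "((\<lambda>x. integral (cbox a b) (\<lambda>t. G t x)) has_field_derivative integral (cbox a b) (\<lambda>t. deriv (G t) w)) (at w within ball w r)"
  proof (rule leibniz_rule_field_derivative[where fx="\<lambda>x t. deriv (G t) x"])
    show "((\<lambda>x. G t x) has_field_derivative deriv (G t) x) (at x within ball w r)"
      if "x \<in> ball w r" "t \<in> cbox a b" for x t
    proof -
      have "G t holomorphic_on U" using hol[of t] that(2) by (simp add: cbox_interval)
      moreover have "x \<in> U" using that(1) r(2) by blast
      ultimately show ?thesis by (rule holomorphic_derivI[OF _ U])
    qed
    show "(\<lambda>t. G t x) integrable_on cbox a b" if "x \<in> ball w r" for x
    proof -
      have "continuous_on {a..b} ((\<lambda>(s,w). G s w) \<circ> (\<lambda>t. (t, x)))"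
      proof (rule continuous_on_compose[OF _ continuous_on_subset[OF cont]])
        show "continuous_on {a..b} (\<lambda>t. (t, x))" by (intro continuous_intros)
        show "(\<lambda>t. (t, x)) ` {a..b} \<subseteq> {a..b} \<times> U" using that r(2) by blast
      qed
      then show ?thesis by (simp add: integrable_continuous_real o_def cbox_interval)
    qed
    show "continuous_on (ball w r \<times> cbox a b) (\<lambda>(x, t). deriv (G t) x)"
      by (rule continuous_on_subset[OF continuous_on_swap_args[OF dc]]) (use r in \<open>auto simp: cbox_interval\<close>)
  qed (use r in simp_all)
  moreover have "at w within ball w r = at w" using r(1) by (intro at_within_open) auto
  moreover have eq: "cbox a b = {a..b}" by (rule cbox_interval)
  ultimately show ?thesis by (simp only: eq)
qed


theorem theorem4p2:
  fixes U :: "complex set"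
    and F H :: "real \<Rightarrow> complex \<Rightarrow> complex"
  assumes "open U"
    and "\<And>t. t \<ge> 0 \<Longrightarrow> F t analytic_on U"
    and "\<And>t. t \<ge> 0 \<Longrightarrow> H t analytic_on U"
    and "\<And>t. t \<ge> 0 \<Longrightarrow> F t ` U \<subseteq> U"
    and "\<And>t. t \<ge> 0 \<Longrightarrow> H t ` U \<subseteq> U"
    and "\<And>z. z \<in> U \<Longrightarrow> F 0 z = z"
    and "\<And>z. z \<in> U \<Longrightarrow> H 0 z = z"
    and "\<And>s t z. s \<ge> 0 \<Longrightarrow> t \<ge> 0 \<Longrightarrow> z \<in> U \<Longrightarrow> F (t + s) z = F t (F s z)"
    and "\<And>s t z. s \<ge> 0 \<Longrightarrow> t \<ge> 0 \<Longrightarrow> z \<in> U \<Longrightarrow>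
           H (t + s) z = H t (F s z) - F s z + H s z"
    and "continuous_on ({0..} \<times> U) (\<lambda>(t, z). F t z)"
    and "continuous_on ({0..} \<times> U) (\<lambda>(t, z). H t z)"
  shows "\<exists>A1 A2. A1 analytic_on U \<and> A2 analytic_on U \<and>
           (\<forall>z\<in>U. \<forall>t\<ge>0.
              ((\<lambda>s. H s z) has_vector_derivative A1 (F t z)) (at t within {0..}) \<and>
              ((\<lambda>s. F s z) has_vector_derivative A2 (F t z)) (at t within {0..}))"
proof -
  note U = assms(1)
  note contF = assms(10) and contH = assms(11)
  have holF: "F t holomorphic_on U" if "t \<ge> 0" for t
    using assms(2)[OF that] analytic_imp_holomorphic by blast
  have holH: "H t holomorphic_on U" if "t \<ge> 0" for t
    using assms(3)[OF that] analytic_imp_holomorphic by blast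
  have FU: "F t z \<in> U" if "t \<ge> 0" "z \<in> U" for t z
    using assms(4)[OF that(1)] that(2) by blast
  have contFz: "continuous_on {0..} (\<lambda>s. F s z)" if "z \<in> U" for z
  proof -
    have "continuous_on {0..} ((\<lambda>(s,w). F s w) \<circ> (\<lambda>t. (t, z)))"
    proof (rule continuous_on_compose[OF _ continuous_on_subset[OF contF]])
      show "continuous_on {0..} (\<lambda>t. (t, z))" by (intro continuous_intros)
      show "(\<lambda>t. (t, z)) ` {0..} \<subseteq> {0..} \<times> U" using that by blast
    qed
    then show ?thesis by (simp add: o_def)
  qed
  have contHz: "continuous_on {0..} (\<lambda>s. H s z)" if "z \<in> U" for z
  proof -
    have "continuous_on {0..} ((\<lambda>(s,w). H s w) \<circ> (\<lambda>t. (t, z)))"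
    proof (rule continuous_on_compose[OF _ continuous_on_subset[OF contH]])
      show "continuous_on {0..} (\<lambda>t. (t, z))" by (intro continuous_intros)
      show "(\<lambda>t. (t, z)) ` {0..} \<subseteq> {0..} \<times> U" using that by blast
    qed
    then show ?thesis by (simp add: o_def)
  qed
  define \<Psi> where "\<Psi> \<tau> w = integral {0..\<tau>} (\<lambda>s. F s w)" for \<tau> w
  define \<Psi>' where "\<Psi>' \<tau> w = integral {0..\<tau>} (\<lambda>s. deriv (F s) w)" for \<tau> w
  have D\<Psi>: "(\<Psi> \<tau> has_field_derivative \<Psi>' \<tau> w) (at w)" if "\<tau> \<ge> 0" "w \<in> U" for \<tau> w
    unfolding \<Psi>_def[abs_def] \<Psi>'_def
  proof (rule param_int_deriv[OF U _ _ that(2)])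
    show "F s holomorphic_on U" if "s \<in> {0..\<tau>}" for s using holF that by simp
    show "continuous_on ({0..\<tau>} \<times> U) (\<lambda>(s, w). F s w)"
      by (rule continuous_on_subset[OF contF]) auto
  qed
  have hol\<Psi>': "\<Psi>' \<tau> holomorphic_on U" if "\<tau> \<ge> 0" for \<tau>
  proof -
    have h: "\<Psi> \<tau> holomorphic_on U"
      using D\<Psi>[OF that] U by (auto simp: holomorphic_on_open)
    have "deriv (\<Psi> \<tau>) holomorphic_on U" by (rule holomorphic_deriv[OF h U])
    moreover have "deriv (\<Psi> \<tau>) w = \<Psi>' \<tau> w" if "w \<in> U" for w
      using D\<Psi>[OF \<open>\<tau> \<ge> 0\<close> that] by (rule DERIV_imp_deriv)
    ultimately show ?thesis by (rule holomorphic_transform)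
  qed
  have claimD: "((\<lambda>s. F s z) has_vector_derivative (F \<tau> (F t z) - F t z) / \<Psi>' \<tau> (F t z)) (at t within {0..})"
    if z: "z \<in> U" and t: "t \<ge> 0" and tau: "\<tau> \<ge> 0" and nz: "\<Psi>' \<tau> (F t z) \<noteq> 0" for z t \<tau>
  proof -
    define V where "V = (\<lambda>u. integral {0..u+\<tau>} (\<lambda>r. F r z) - integral {0..u} (\<lambda>r. F r z))"
    have DV: "(V has_vector_derivative F (t+\<tau>) z - F t z) (at t within {0..})"
      unfolding V_def using int_shift_deriv[OF contFz[OF z] t tau] by simp
    have eq: "\<Psi> \<tau> (F y z) = V y" if y: "y \<in> {0..}" for y
    proof -
      have "\<Psi> \<tau> (F y z) = integral {0..\<tau>} (\<lambda>s. F (s + y) z)"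
        unfolding \<Psi>_def
        by (rule integral_cong) (use assms(8)[of y _ z] y z in auto)
      also have "\<dots> = V y"
        using int_shift_eq[OF contFz[OF z], of y \<tau>] y tau by (simp add: V_def)
      finally show ?thesis .
    qed
    have ct: "continuous (at t within {0..}) (\<lambda>s. F s z)"
      using contFz[OF z] t by (simp add: continuous_on_eq_continuous_within)
    have "((\<lambda>s. F s z) has_vector_derivative (F (t+\<tau>) z - F t z) / \<Psi>' \<tau> (F t z)) (at t within {0..})"
      by (rule lemmaC[OF D\<Psi>[OF tau FU[OF t z]] nz ct eq _ DV]) (use t in auto)
    moreover have "F (t+\<tau>) z = F \<tau> (F t z)" using assms(8)[OF t tau z] by (simp add: add.commute)
    ultimately show ?thesis by simp
  qed
  have E: "\<exists>\<tau>>0. \<exists>r>0. ball w0 r \<subseteq> U \<and> (\<forall>w\<in>ball w0 r. \<Psi>' \<tau> w \<noteq> 0)" if w0: "w0 \<in> U" for w0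
  proof -
    have "((\<lambda>x. x) has_field_derivative 1) (at w0)" by (rule DERIV_ident)
    then have "(F 0 has_field_derivative 1) (at w0)"
      by (rule has_field_derivative_transform_within_open[OF _ U w0]) (simp add: assms(6))
    then have d0: "deriv (F 0) w0 = 1" by (rule DERIV_imp_deriv)
    have dc: "continuous_on ({0..} \<times> U) (\<lambda>(s,w). deriv (F s) w)"
      by (rule deriv_joint_cont[OF U _ holF contF]) auto
    have cd: "continuous_on {0..} (\<lambda>s. deriv (F s) w0)"
    proof -
      have "continuous_on {0..} ((\<lambda>(s,w). deriv (F s) w) \<circ> (\<lambda>t. (t, w0)))"
      proof (rule continuous_on_compose[OF _ continuous_on_subset[OF dc]])
        show "continuous_on {0..} (\<lambda>t. (t, w0))" by (intro continuous_intros)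
        show "(\<lambda>t. (t, w0)) ` {0..} \<subseteq> {0..} \<times> U" using w0 by blast
      qed
      then show ?thesis by (simp add: o_def)
    qed
    then obtain d where d: "d > 0" "\<And>s. s \<in> {0..} \<Longrightarrow> dist s 0 < d \<Longrightarrow> dist (deriv (F s) w0) (deriv (F 0) w0) < 1/2"
      unfolding continuous_on_iff by (metis atLeast_iff order_refl half_gt_zero zero_less_one)
    define \<tau> where "\<tau> = d / 2"
    have tau: "\<tau> > 0" using d by (simp add: \<tau>_def)
    have cdt: "continuous_on {0..\<tau>} (\<lambda>s. deriv (F s) w0)" by (rule continuous_on_subset[OF cd]) auto
    have "\<Psi>' \<tau> w0 - of_real \<tau> = integral {0..\<tau>} (\<lambda>s. deriv (F s) w0 - 1)"
      unfolding \<Psi>'_def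
      using integral_diff[OF integrable_continuous_real[OF cdt] integrable_const_ivl[of 1 0 \<tau>]] tau
      by (simp add: scaleR_conv_of_real)
    also have "norm \<dots> \<le> 1/2 * (\<tau> - 0)"
    proof (rule integral_bound)
      show "continuous_on {0..\<tau>} (\<lambda>s. deriv (F s) w0 - 1)" by (intro continuous_intros cdt)
      show "norm (deriv (F s) w0 - 1) \<le> 1/2" if "s \<in> {0..\<tau>}" for s
      proof -
        have "s < d" using that d by (simp add: \<tau>_def)
        then have "dist (deriv (F s) w0) (deriv (F 0) w0) < 1/2" using d(2)[of s] that by simp
        then show ?thesis using d0 by (simp add: dist_norm)
      qed
    qed (use tau in simp)
    finally have nb: "norm (\<Psi>' \<tau> w0 - of_real \<tau>) \<le> \<tau> / 2" by simp
    have nz: "\<Psi>' \<tau> w0 \<noteq> 0"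
    proof
      assume "\<Psi>' \<tau> w0 = 0"
      with nb have "\<tau> \<le> \<tau>/2" by simp
      with tau show False by simp
    qed
    have ca: "continuous (at w0) (\<Psi>' \<tau>)"
      using hol\<Psi>'[of \<tau>] tau U w0
      by (meson holomorphic_on_imp_continuous_on continuous_on_eq_continuous_at less_imp_le)
    then obtain e where e: "e > 0" "\<And>y. dist w0 y < e \<Longrightarrow> \<Psi>' \<tau> y \<noteq> 0"
      using continuous_at_avoid[of w0 "\<Psi>' \<tau>" 0, OF ca nz] by blast
    obtain r0 where r0: "r0 > 0" "ball w0 r0 \<subseteq> U" using U w0 open_contains_ball by blast
    show ?thesis
      by (rule exI[of _ \<tau>], rule conjI[OF tau], rule exI[of _ "min e r0"]) (use e r0 in auto)
  qed
  define A2 where "A2 w = vector_derivative (\<lambda>s. F s w) (at 0 within {0..})" for w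
  have nbot: "at (0::real) within {0..} \<noteq> bot"
    by (simp add: at_within_Ici_at_right)
  have A2eq: "A2 w = (F \<tau> w - w) / \<Psi>' \<tau> w" if "w \<in> U" "\<tau> \<ge> 0" "\<Psi>' \<tau> w \<noteq> 0" for w \<tau>
    using claimD[OF that(1) order_refl that(2)] that assms(6)[OF that(1)]
    unfolding A2_def by (intro vector_derivative_within[OF nbot]) simp
  have derivF: "((\<lambda>s. F s z) has_vector_derivative A2 (F t z)) (at t within {0..})"
    if z: "z \<in> U" and t: "t \<ge> 0" for z t
  proof -
    obtain \<tau> r where tau: "\<tau> > 0" and r: "r > 0" "\<forall>w\<in>ball (F t z) r. \<Psi>' \<tau> w \<noteq> 0"
      using E[OF FU[OF t z]] by blast
    have nz: "\<Psi>' \<tau> (F t z) \<noteq> 0" using r by simp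
    show ?thesis
      using claimD[OF z t _ nz] A2eq[OF FU[OF t z] _ nz] tau by simp
  qed
  have A2an: "A2 analytic_on U"
    unfolding analytic_on_def
  proof
    fix w0 assume w0: "w0 \<in> U"
    obtain \<tau> r where tau: "\<tau> > 0" and r: "r > 0" "ball w0 r \<subseteq> U" "\<forall>w\<in>ball w0 r. \<Psi>' \<tau> w \<noteq> 0"
      using E[OF w0] by blast
    have "(\<lambda>w. (F \<tau> w - w) / \<Psi>' \<tau> w) holomorphic_on ball w0 r"
      by (intro holomorphic_on_divide holomorphic_on_diff holomorphic_on_ident
            holomorphic_on_subset[OF holF r(2)] holomorphic_on_subset[OF hol\<Psi>' r(2)])
         (use tau r in auto)
    then have "A2 holomorphic_on ball w0 r"
    proof (rule holomorphic_transform)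
      fix x assume x: "x \<in> ball w0 r"
      then have "x \<in> U" "\<Psi>' \<tau> x \<noteq> 0" using r by auto
      then show "(F \<tau> x - x) / \<Psi>' \<tau> x = A2 x" using A2eq[of x \<tau>] tau by simp
    qed
    then show "\<exists>e>0. A2 holomorphic_on ball w0 e" using r by blast
  qed
  define \<Phi> where "\<Phi> w = integral {0..1} (\<lambda>s. H s w)" for w
  have hol\<Phi>: "\<Phi> holomorphic_on U"
  proof -
    have "(\<Phi> has_field_derivative integral {0..1} (\<lambda>s. deriv (H s) w)) (at w)" if "w \<in> U" for w
      unfolding \<Phi>_def[abs_def]
    proof (rule param_int_deriv[OF U _ _ that])
      show "H s holomorphic_on U" if "s \<in> {0..1}" for s using holH that by simp
      show "continuous_on ({0..1} \<times> U) (\<lambda>(s, w). H s w)"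
        by (rule continuous_on_subset[OF contH]) auto
    qed
    then show ?thesis using U by (auto simp: holomorphic_on_open)
  qed
  define A1 where "A1 w = H 1 w - w - A2 w * deriv \<Phi> w + A2 w" for w
  have A1an: "A1 analytic_on U"
  proof -
    have "deriv \<Phi> analytic_on U" using hol\<Phi> U by (simp add: analytic_on_open holomorphic_deriv)
    then show ?thesis unfolding A1_def[abs_def]
      by (intro analytic_on_add analytic_on_diff analytic_on_mult analytic_on_ident A2an assms(3)) auto
  qed
  have derivH: "((\<lambda>s. H s z) has_vector_derivative A1 (F t z)) (at t within {0..})"
    if z: "z \<in> U" and t: "t \<ge> 0" for z t
  proof -
    define V where "V = (\<lambda>u. integral {0..u+1} (\<lambda>r. H r z) - integral {0..u} (\<lambda>r. H r z))"
    have DV: "(V has_vector_derivative H (t+1) z - H t z) (at t within {0..})"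
      unfolding V_def using int_shift_deriv[OF contHz[OF z] t, of 1] by simp
    have eq: "H y z = V y - \<Phi> (F y z) + F y z" if y: "y \<in> {0..}" for y
    proof -
      have ci: "(\<lambda>s. H s (F y z)) integrable_on {0..1}"
        by (rule integrable_continuous_real, rule continuous_on_subset[OF contHz[OF FU]]) (use y z in auto)
      have "integral {0..1} (\<lambda>s. H (s + y) z) = integral {0..1} (\<lambda>s. H s (F y z) + (H y z - F y z))"
        by (rule integral_cong) (use assms(9)[of y _ z] y z in auto)
      also have "\<dots> = \<Phi> (F y z) + (H y z - F y z)"
        unfolding \<Phi>_def by (subst integral_add[OF ci]) auto
      finally have "integral {0..1} (\<lambda>s. H (s + y) z) = \<Phi> (F y z) + (H y z - F y z)" .
      moreover have "integral {0..1} (\<lambda>s. H (s + y) z) = V y"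
        using int_shift_eq[OF contHz[OF z], of y 1] y by (simp add: V_def)
      ultimately show ?thesis by (simp add: algebra_simps)
    qed
    have DF: "((\<lambda>s. F s z) has_vector_derivative A2 (F t z)) (at t within {0..})" by (rule derivF[OF z t])
    have DPhi: "(\<Phi> has_field_derivative deriv \<Phi> (F t z)) (at (F t z) within (\<lambda>s. F s z) ` {0..})"
      by (rule holomorphic_derivI[OF hol\<Phi> U FU[OF t z]])
    have "((\<lambda>s. \<Phi> (F s z)) has_vector_derivative A2 (F t z) * deriv \<Phi> (F t z)) (at t within {0..})"
      using field_vector_diff_chain_within[OF DF DPhi] by (simp add: o_def)
    then have "((\<lambda>s. V s - \<Phi> (F s z) + F s z) has_vector_derivative
        (H (t+1) z - H t z) - A2 (F t z) * deriv \<Phi> (F t z) + A2 (F t z)) (at t within {0..})"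
      by (intro has_vector_derivative_add has_vector_derivative_diff DV DF)
    then have "((\<lambda>s. H s z) has_vector_derivative
        (H (t+1) z - H t z) - A2 (F t z) * deriv \<Phi> (F t z) + A2 (F t z)) (at t within {0..})"
      by (rule has_vector_derivative_transform[rotated 2]) (use eq t in auto)
    moreover have "H (t+1) z - H t z = H 1 (F t z) - F t z"
      using assms(9)[OF t _ z, of 1] by (simp add: add.commute)
    ultimately show ?thesis by (simp add: A1_def)
  qed
  show ?thesis using A1an A2an derivH derivF by blast
qed

end
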